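(* Let $\gamma>0$, $p\geq1$, and $B\geq A$ be real numbers. Let $(a,b)\subseteq\mathbb{R}$ be an interval with length $b-a\geq1$, and let $u:(a,b)\to[A,B]$ be a measurable function. For every $x\in\mathbb{R}$ and every real $\delta>0$ set $a_{x,\delta}=(a-x)/\delta$, $b_{x,\delta}=(b-x)/\delta$, and define $v_{x,\delta}:\mathcal{D}\cap(a_{x,\delta},b_{x,\delta})\to\mathbb{R}$ by $v_{x,\delta}(q)=u(x+q\delta)$. Then for every real number $\lambda\geq B-A$, $$F_{\gamma,p,\lambda}(u,(a,b))=2\lambda^p\int_{1/2}^1 \delta^{\gamma-1}\left(\int_0^\delta DF_{\gamma,p,\lambda}\big(\delta,v_{x,\delta},(a_{x,\delta},b_{x,\delta})\big)\,dx\right)d\delta.$$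
   Context: For an interval $(a,b)\subseteq\mathbb{R}$ and measurable $u$ on it, $F_{\gamma,p,\lambda}(u,(a,b))=\lambda^p\iint_{E}|y-x|^{\gamma-1}\,dx\,dy$, where $E=\{(x,y)\in(a,b)^2:|u(y)-u(x)|>\lambda|y-x|^{1+\gamma/p}\}$. Let $\psi_{\gamma,p,\lambda}(\delta,\Delta)=1$ if $\Delta>\lambda\delta^{1+\gamma/p}$ and $0$ otherwise, for $(\delta,\Delta)\in[0,\infty)^2$. Let $\mathcal{D}=\{i/2^k:i\in\mathbb{Z},k\in\mathbb{N}\}$ be the dyadic numbers. For an interval $(a,b)$ and integer $k\geq0$, let $\mathcal{D}_k(a,b)=\{i\in\mathbb{Z}:[i/2^k,(i+1)/2^k]\subseteq(a,b)\}$. For $\delta>0$ and $v:\mathcal{D}\cap(a,b)\to\mathbb{R}$, the dyadic functional is $$DF_{\gamma,p,\lambda}(\delta,v,(a,b))=\sum_{k=0}^\infty\frac{1}{2^{k(\gamma+1)}}\sum_{i\in\mathcal{D}_k(a,b)}\psi_{\gamma,p,\lambda}\!\left(\frac{\delta}{2^k},\left|v\!\left(\tfrac{i+1}{2^k}\right)-v\!\left(\tfrac{i}{2^k}\right)\right|\right).$$ *)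

theory Defs
  imports "HOL-Analysis.Analysis"
begin

definition psi :: "real \<Rightarrow> real \<Rightarrow> real \<Rightarrow> real \<Rightarrow> real \<Rightarrow> real" where
  "psi g p lam \<delta> \<Delta> = (if \<Delta> > lam * \<delta> powr (1 + g / p) then 1 else 0)"

definition dyadic_idx :: "real \<Rightarrow> real \<Rightarrow> nat \<Rightarrow> int set" where
  "dyadic_idx a b k = {i. a < real_of_int i / 2 ^ k \<and> real_of_int (i + 1) / 2 ^ k < b}"

definition DF :: "real \<Rightarrow> real \<Rightarrow> real \<Rightarrow> real \<Rightarrow> (real \<Rightarrow> real) \<Rightarrow> real \<Rightarrow> real \<Rightarrow> ennreal" where
  "DF g p lam \<delta> v a b =
     (\<Sum>k. ennreal ((1 / 2 powr (real k * (g + 1))) *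
        (\<Sum>i\<in>dyadic_idx a b k.
           psi g p lam (\<delta> / 2 ^ k)
             \<bar>v (real_of_int (i + 1) / 2 ^ k) - v (real_of_int i / 2 ^ k)\<bar>)))"

definition Ffun :: "real \<Rightarrow> real \<Rightarrow> real \<Rightarrow> (real \<Rightarrow> real) \<Rightarrow> real \<Rightarrow> real \<Rightarrow> ennreal" where
  "Ffun g p lam u a b =
     ennreal (lam powr p) *
     (\<integral>\<^sup>+ z \<in> {(x, y). x \<in> {a<..<b} \<and> y \<in> {a<..<b} \<and>
                   \<bar>u y - u x\<bar> > lam * \<bar>y - x\<bar> powr (1 + g / p)}.
        ennreal (\<bar>snd z - fst z\<bar> powr (g - 1)) \<partial>(lebesgue :: (real \<times> real) measure))"

end

theory Submission
  imports Defs
begin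
definition chi :: "real \<Rightarrow> real \<Rightarrow> real \<Rightarrow> real \<Rightarrow> (real \<Rightarrow> real) \<Rightarrow> real \<Rightarrow> real \<Rightarrow> ennreal" where
  "chi lam c a b w h t = (if a < t \<and> t + h < b \<and> lam * h powr c < \<bar>w (t + h) - w t\<bar> then 1 else 0)"

definition Gf :: "real \<Rightarrow> real \<Rightarrow> real \<Rightarrow> real \<Rightarrow> (real \<Rightarrow> real) \<Rightarrow> real \<Rightarrow> ennreal" where
  "Gf lam c a b w h = (\<integral>\<^sup>+t. chi lam c a b w h t \<partial>lborel)"

lemma chi_meas[measurable]:
  assumes [measurable]: "w \<in> borel_measurable borel"
  shows "(\<lambda>z. chi lam c a b w (fst z) (snd z)) \<in> borel_measurable (lborel \<Otimes>\<^sub>M lborel)"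
  unfolding chi_def by measurable

lemma chi_meas2[measurable]:
  assumes [measurable]: "w \<in> borel_measurable borel"
    and [measurable]: "f \<in> borel_measurable M" "g \<in> borel_measurable M"
  shows "(\<lambda>z. chi lam c a b w (f z) (g z)) \<in> borel_measurable M"
  unfolding chi_def by measurable

lemma Gf_meas[measurable]:
  assumes [measurable]: "w \<in> borel_measurable borel"
  shows "Gf lam c a b w \<in> borel_measurable borel"
proof -
  have "(\<lambda>h. Gf lam c a b w h) \<in> borel_measurable lborel"
    unfolding Gf_def by measurable
  then show ?thesis by simp
qed

lemma count_lemma:
  fixes h t :: real and k :: nat
  assumes h: "h > 0"
  shows "(\<integral>\<^sup>+i. indicator {real_of_int i * h ..< real_of_int i * h + 2^k * h} t \<partial>count_space (UNIV::int set)) = 2^k"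
proof -
  define m where "m = \<lfloor>t / h\<rfloor>"
  have S: "{i::int. t \<in> {real_of_int i * h ..< real_of_int i * h + 2^k * h}} = {m - 2^k + 1 .. m}"
  proof (intro set_eqI iffI)
    fix i assume "i \<in> {i::int. t \<in> {real_of_int i * h ..< real_of_int i * h + 2^k * h}}"
    then have 1: "real_of_int i \<le> t / h" and 2: "t / h < real_of_int i + 2^k"
      using h by (auto simp: field_simps)
    from 1 have "i \<le> m" unfolding m_def by (simp add: le_floor_iff)
    moreover from 2 have "m < i + 2^k" unfolding m_def
      by (metis floor_less_iff of_int_add of_int_numeral of_int_power)
    ultimately show "i \<in> {m - 2^k + 1 .. m}" by simp
  next
    fix i assume "i \<in> {m - 2^k + 1 .. m}"
    then have "i \<le> m" "m < i + 2^k" by auto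
    then have 1: "real_of_int i \<le> t / h" and 2: "t / h < real_of_int i + 2^k"
      unfolding m_def
      apply (simp add: le_floor_iff)
      by (smt (verit, best) \<open>m < i + 2 ^ k\<close> floor_correct m_def of_int_1 of_int_add of_int_less_iff of_int_numeral of_int_power)
    then show "i \<in> {i::int. t \<in> {real_of_int i * h ..< real_of_int i * h + 2^k * h}}"
      using h by (auto simp: field_simps)
  qed
  have "(\<integral>\<^sup>+i. indicator {real_of_int i * h ..< real_of_int i * h + 2^k * h} t \<partial>count_space (UNIV::int set))
     = (\<integral>\<^sup>+i. indicator {m - 2^k + 1 .. m} i \<partial>count_space (UNIV::int set))"
    apply (intro nn_integral_cong)
    using S by (auto simp: indicator_def set_eq_iff)
  also have "\<dots> = 2^k"
    by (simp add: ennreal_power[symmetric])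
  finally show ?thesis .
qed

lemma count_int_meas[measurable]:
  fixes f :: "int \<Rightarrow> 'a \<Rightarrow> ennreal"
  assumes "\<And>i. f i \<in> borel_measurable M"
  shows "(\<lambda>x. \<integral>\<^sup>+i. f i x \<partial>count_space UNIV) \<in> borel_measurable M"
proof -
  interpret C: sigma_finite_measure "count_space (UNIV::int set)"
    by (rule sigma_finite_measure_count_space)
  have "(\<lambda>(i, x). f i x) \<in> borel_measurable (count_space UNIV \<Otimes>\<^sub>M M)"
    by (rule measurable_pair_measure_countable1) (auto simp: assms)
  then have "(\<lambda>(x, i). f i x) \<in> borel_measurable (M \<Otimes>\<^sub>M count_space UNIV)"
    by (subst measurable_pair_swap_iff) simp
  then show ?thesis
    by (rule C.borel_measurable_nn_integral[of "\<lambda>x i. f i x", simplified])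
qed

lemma finite_dyadic_idx: "finite (dyadic_idx a b k)"
proof -
  have "dyadic_idx a b k \<subseteq> {\<lfloor>a * 2^k\<rfloor> .. \<lceil>b * 2^k\<rceil>}"
  proof
    fix i assume "i \<in> dyadic_idx a b k"
    then have "a < real_of_int i / 2^k" "real_of_int (i+1) / 2^k < b" by (auto simp: dyadic_idx_def)
    then have "a * 2^k < real_of_int i" "real_of_int i + 1 < b * 2^k" by (auto simp: field_simps)
    then show "i \<in> {\<lfloor>a * 2^k\<rfloor> .. \<lceil>b * 2^k\<rceil>}"
      by (auto simp: floor_le_iff le_ceiling_iff)
  qed
  then show ?thesis by (rule finite_subset) simp
qed

lemma DF_pointwise:
  fixes \<delta> :: real
  assumes d: "\<delta> > 0"
  shows "DF g p lam \<delta> (\<lambda>q. w (x + q * \<delta>)) ((a - x) / \<delta>) ((b - x) / \<delta>)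
    = (\<Sum>k. ennreal (1 / 2 powr (real k * (g + 1))) *
        (\<integral>\<^sup>+i. chi lam (1 + g / p) a b w (\<delta> / 2^k) (x + real_of_int i * (\<delta> / 2^k)) \<partial>count_space UNIV))"
  unfolding DF_def
proof (rule suminf_cong)
  fix k :: nat
  define h where "h = \<delta> / 2^k"
  have h: "h > 0" using d by (simp add: h_def)
  let ?D = "dyadic_idx ((a - x) / \<delta>) ((b - x) / \<delta>) k"
  let ?P = "\<lambda>i. psi g p lam (\<delta> / 2 ^ k) \<bar>w (x + real_of_int (i + 1) / 2 ^ k * \<delta>) - w (x + real_of_int i / 2 ^ k * \<delta>)\<bar>"
  have P01: "?P i \<ge> 0" for i by (simp add: psi_def)
  have memD: "i \<in> ?D \<longleftrightarrow> a < x + real_of_int i * h \<and> x + real_of_int i * h + h < b" for i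
  proof -
    have "i \<in> ?D \<longleftrightarrow> (a - x) / \<delta> < real_of_int i / 2^k \<and> real_of_int (i + 1) / 2^k < (b - x) / \<delta>"
      by (simp add: dyadic_idx_def)
    also have "\<dots> \<longleftrightarrow> a < x + real_of_int i * h \<and> x + real_of_int i * h + h < b"
      using d unfolding h_def by (simp add: field_simps)
    finally show ?thesis .
  qed
  have e1: "x + real_of_int (i + 1) / 2 ^ k * \<delta> = x + real_of_int i * h + h" for i
    unfolding h_def by (simp add: field_simps)
  have e2: "x + real_of_int i / 2 ^ k * \<delta> = x + real_of_int i * h" for i
    unfolding h_def by (simp add: field_simps)
  have "ennreal (1 / 2 powr (real k * (g + 1)) * sum ?P ?D)
      = ennreal (1 / 2 powr (real k * (g + 1))) * (\<Sum>i\<in>?D. ennreal (?P i))"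
  proof -
    have "ennreal (1 / 2 powr (real k * (g + 1)) * sum ?P ?D) = ennreal (1 / 2 powr (real k * (g + 1))) * ennreal (sum ?P ?D)"
      by (rule ennreal_mult) (simp, rule sum_nonneg, rule P01)
    also have "ennreal (sum ?P ?D) = (\<Sum>i\<in>?D. ennreal (?P i))"
      by (rule sum_ennreal[symmetric]) (rule P01)
    finally show ?thesis .
  qed
  also have "(\<Sum>i\<in>?D. ennreal (?P i)) = (\<Sum>i\<in>?D. chi lam (1 + g / p) a b w h (x + real_of_int i * h))"
  proof (rule sum.cong)
    fix i assume "i \<in> ?D"
    then show "ennreal (?P i) = chi lam (1 + g / p) a b w h (x + real_of_int i * h)"
      unfolding memD chi_def psi_def e1 e2 h_def[symmetric] by (simp add: distrib_right add.assoc)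
  qed simp
  also have "\<dots> = (\<integral>\<^sup>+i. chi lam (1 + g / p) a b w h (x + real_of_int i * h) \<partial>count_space UNIV)"
    by (rule nn_integral_count_space'[symmetric]) (auto simp: finite_dyadic_idx memD chi_def)
  finally show "ennreal (1 / 2 powr (real k * (g + 1)) * sum ?P ?D) = ennreal (1 / 2 powr (real k * (g + 1))) *
        (\<integral>\<^sup>+i. chi lam (1 + g / p) a b w (\<delta> / 2^k) (x + real_of_int i * (\<delta> / 2^k)) \<partial>count_space UNIV)"
    by (simp add: h_def)
qed

lemma shift_lemma:
  fixes s \<delta> h :: real
  assumes [measurable]: "w \<in> borel_measurable borel"
  shows "(\<integral>\<^sup>+x. chi lam c a b w h (x + s) * indicator {0..\<delta>} x \<partial>lborel)
       = (\<integral>\<^sup>+t. chi lam c a b w h t * indicator {s..<s+\<delta>} t \<partial>lborel)"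
proof -
  have "(\<integral>\<^sup>+x. chi lam c a b w h (x + s) * indicator {0..\<delta>} x \<partial>lborel)
      = (\<integral>\<^sup>+x. chi lam c a b w h (s + 1 * x) * indicator {s..<s+\<delta>} (s + 1 * x) \<partial>lborel)"
  proof (rule nn_integral_cong_AE)
    show "AE x in lborel. chi lam c a b w h (x + s) * indicator {0..\<delta>} x =
         chi lam c a b w h (s + 1 * x) * indicator {s..<s+\<delta>} (s + 1 * x)"
      using AE_lborel_singleton[of \<delta>]
      by eventually_elim (auto simp: indicator_def add.commute)
  qed
  also have "\<dots> = (\<integral>\<^sup>+t. chi lam c a b w h t * indicator {s..<s+\<delta>} t \<partial>lborel)"
  proof -
    have m: "(\<lambda>t. chi lam c a b w h t * indicator {s..<s+\<delta>} t) \<in> borel_measurable borel"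
      by measurable
    show ?thesis using nn_integral_real_affine[OF m, of 1 s] by simp
  qed
  finally show ?thesis .
qed

lemma inner_w:
  fixes \<delta> :: real
  assumes [measurable]: "w \<in> borel_measurable borel" and d: "\<delta> > 0"
  shows "(\<integral>\<^sup>+x. DF g p lam \<delta> (\<lambda>q. w (x + q * \<delta>)) ((a - x) / \<delta>) ((b - x) / \<delta>) * indicator {0..\<delta>} x \<partial>lborel)
       = (\<Sum>k. ennreal (1 / 2 powr (real k * (g + 1))) * (2^k * Gf lam (1 + g / p) a b w (\<delta> / 2^k)))"
proof -
  let ?c = "1 + g / p"
  let ?I = "\<lambda>k x. (\<integral>\<^sup>+i. chi lam ?c a b w (\<delta> / 2^k) (x + real_of_int i * (\<delta> / 2^k)) \<partial>count_space UNIV)"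
  have "(\<integral>\<^sup>+x. DF g p lam \<delta> (\<lambda>q. w (x + q * \<delta>)) ((a - x) / \<delta>) ((b - x) / \<delta>) * indicator {0..\<delta>} x \<partial>lborel)
      = (\<integral>\<^sup>+x. (\<Sum>k. ennreal (1 / 2 powr (real k * (g + 1))) * (?I k x * indicator {0..\<delta>} x)) \<partial>lborel)"
    by (rule nn_integral_cong) (simp only: DF_pointwise[OF d] ennreal_suminf_multc[symmetric] mult.assoc)
  also have "\<dots> = (\<Sum>k. \<integral>\<^sup>+x. ennreal (1 / 2 powr (real k * (g + 1))) * (?I k x * indicator {0..\<delta>} x) \<partial>lborel)"
    by (rule nn_integral_suminf) measurable
  also have "\<dots> = (\<Sum>k. ennreal (1 / 2 powr (real k * (g + 1))) * (\<integral>\<^sup>+x. ?I k x * indicator {0..\<delta>} x \<partial>lborel))"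
    by (rule suminf_cong, rule nn_integral_cmult) measurable
  also have "\<dots> = (\<Sum>k. ennreal (1 / 2 powr (real k * (g + 1))) * (2^k * Gf lam ?c a b w (\<delta> / 2^k)))"
  proof (rule suminf_cong)
    fix k :: nat
    define h where "h = \<delta> / 2^k"
    have h: "h > 0" using d by (simp add: h_def)
    have dh: "\<delta> = 2^k * h" unfolding h_def by simp
    have "(\<integral>\<^sup>+x. ?I k x * indicator {0..\<delta>} x \<partial>lborel)
        = (\<integral>\<^sup>+x. (\<integral>\<^sup>+i. chi lam ?c a b w h (x + real_of_int i * h) * indicator {0..\<delta>} x \<partial>count_space UNIV) \<partial>lborel)"
      unfolding h_def[symmetric] by (subst nn_integral_multc) auto
    also have "\<dots> = (\<integral>\<^sup>+i. (\<integral>\<^sup>+x. chi lam ?c a b w h (x + real_of_int i * h) * indicator {0..\<delta>} x \<partial>lborel) \<partial>count_space UNIV)"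
      by (rule nn_integral_count_space_nn_integral) auto
    also have "\<dots> = (\<integral>\<^sup>+i. (\<integral>\<^sup>+t. chi lam ?c a b w h t * indicator {real_of_int i * h..<real_of_int i * h + \<delta>} t \<partial>lborel) \<partial>count_space UNIV)"
      by (simp add: shift_lemma)
    also have "\<dots> = (\<integral>\<^sup>+t. (\<integral>\<^sup>+i. chi lam ?c a b w h t * indicator {real_of_int i * h..<real_of_int i * h + \<delta>} t \<partial>count_space UNIV) \<partial>lborel)"
      by (rule nn_integral_count_space_nn_integral[symmetric]) auto
    also have "\<dots> = (\<integral>\<^sup>+t. chi lam ?c a b w h t * 2^k \<partial>lborel)"
      by (subst nn_integral_cmult) (auto simp: dh count_lemma[OF h])
    also have "\<dots> = 2^k * Gf lam ?c a b w h"
      unfolding Gf_def by (subst nn_integral_multc) (measurable, simp add: mult.commute)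
    finally show "ennreal (1 / 2 powr (real k * (g + 1))) * (\<integral>\<^sup>+x. ?I k x * indicator {0..\<delta>} x \<partial>lborel)
       = ennreal (1 / 2 powr (real k * (g + 1))) * (2^k * Gf lam ?c a b w (\<delta> / 2^k))"
      by (simp add: h_def)
  qed
  finally show ?thesis .
qed

lemma dyadic_partition:
  fixes h :: real
  shows "(\<Sum>k. (indicator {1/2<..1} (2^k * h) :: ennreal)) = indicator {0<..1} h"
proof (cases "0 < h \<and> h \<le> 1")
  case True
  define k0 where "k0 = nat \<lfloor>log 2 (1 / h)\<rfloor>"
  have lg: "log 2 (1 / h) \<ge> 0" using True by simp
  have eq: "(indicator {1/2<..1} (2^k * h) :: ennreal) = (if k = k0 then 1 else 0)" for k
  proof -
    have "(2^k * h \<in> {1/2<..1}) \<longleftrightarrow> 2 powr real k \<le> 1 / h \<and> 1 / h < 2 powr (real k + 1)"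
      using True by (auto simp: powr_realpow powr_add field_simps)
    also have "\<dots> \<longleftrightarrow> \<lfloor>log 2 (1 / h)\<rfloor> = int k"
      using floor_log_eq_powr_iff[of "1/h" 2 "int k"] True by simp
    also have "\<dots> \<longleftrightarrow> k = k0"
      unfolding k0_def using lg by (auto simp: nat_eq_iff)
    finally show ?thesis by (simp add: indicator_def)
  qed
  have "(\<Sum>k. (indicator {1/2<..1} (2^k * h) :: ennreal)) = (\<Sum>k. if k = k0 then 1 else 0)"
    by (simp add: eq)
  also have "\<dots> = 1"
    using sums_single[of k0 "\<lambda>_. 1::ennreal"] by (simp add: sums_iff)
  finally show ?thesis using True by simp
next
  case False
  have "(indicator {1/2<..1} (2^k * h) :: ennreal) = 0" for k
  proof -
    have "(1::real) \<le> 2^k" by simp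
    have "\<not> (1/2 < 2^k * h \<and> 2^k * h \<le> 1)"
    proof (cases "h \<le> 0")
      case True
      then have "2^k * h \<le> 0" by (simp add: mult_nonneg_nonpos)
      then show ?thesis by simp
    next
      case F: False
      with False have "h > 1" by simp
      then have "2^k * h \<ge> 1 * h" using \<open>(1::real) \<le> 2^k\<close> by (intro mult_right_mono) auto
      then show ?thesis using \<open>h > 1\<close> by linarith
    qed
    then show ?thesis by (simp add: indicator_def)
  qed
  then have "(\<Sum>k. (indicator {1/2<..1} (2^k * h) :: ennreal)) = 0" by simp
  then show ?thesis using False by (simp add: indicator_def)
qed

lemma real_ident:
  fixes h g :: real and k :: nat
  assumes h: "h > 0"
  shows "2^k * ((2^k * h) powr (g - 1) * (1 / 2 powr (real k * (g + 1))) * 2^k) = h powr (g - 1)"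
proof -
  have a: "(2::real)^k = 2 powr real k" by (simp add: powr_realpow)
  have "(2^k * h) powr (g - 1) = (2 powr real k) powr (g - 1) * h powr (g - 1)"
    using h by (simp add: powr_mult a)
  also have "(2 powr real k) powr (g - 1) = 2 powr (real k * (g - 1))"
    by (simp add: powr_powr)
  finally have b: "(2^k * h) powr (g - 1) = 2 powr (real k * (g - 1)) * h powr (g - 1)" .
  have c: "2 powr real k * (2 powr (real k * (g - 1)) * (1 / 2 powr (real k * (g + 1))) * 2 powr real k) = (1::real)"
  proof -
    have "2 powr real k * (2 powr (real k * (g - 1)) * (1 / 2 powr (real k * (g + 1))) * 2 powr real k)
        = 2 powr (real k + real k * (g - 1) + real k) / 2 powr (real k * (g + 1))"
      by (simp only: powr_add) (simp add: field_simps)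
    also have "real k + real k * (g - 1) + real k = real k * (g + 1)" by (simp add: algebra_simps)
    finally show ?thesis by simp
  qed
  have "2^k * ((2^k * h) powr (g - 1) * (1 / 2 powr (real k * (g + 1))) * 2^k)
      = (2 powr real k * (2 powr (real k * (g - 1)) * (1 / 2 powr (real k * (g + 1))) * 2 powr real k)) * h powr (g - 1)"
    unfolding b by (simp only: a ac_simps)
  then show ?thesis using c by simp
qed

lemma ennreal_aux:
  fixes x y z :: real and G :: ennreal
  assumes "x \<ge> 0" "y \<ge> 0" "z \<ge> 0"
  shows "ennreal z * (ennreal x * (ennreal y * (ennreal z * G))) = ennreal (z * (x * y * z)) * G"
  using assms by (simp add: ennreal_mult mult_nonneg_nonneg ac_simps)

lemma ennreal_ident:
  fixes h g :: real and k :: nat and G :: ennreal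
  shows "ennreal \<bar>2^k\<bar> * (ennreal ((2^k * h) powr (g - 1)) * (ennreal (1 / 2 powr (real k * (g + 1))) * (2^k * G))
            * indicator {1/2<..1} (2^k * h))
        = ennreal (h powr (g - 1)) * G * indicator {1/2<..1} (2^k * h)"
proof (cases "2^k * h \<in> {1/2<..1}")
  case True
  then have "2^k * h > 0" by simp
  then have h: "h > 0" by (simp add: zero_less_mult_iff)
  have e2: "(2::ennreal)^k = ennreal (2^k)" using ennreal_power[of 2 k] by simp
  have "ennreal \<bar>2^k\<bar> * (ennreal ((2^k * h) powr (g - 1)) * (ennreal (1 / 2 powr (real k * (g + 1))) * (2^k * G)))
      = ennreal (2^k * ((2^k * h) powr (g - 1) * (1 / 2 powr (real k * (g + 1))) * 2^k)) * G"
    unfolding e2 by (simp only: power_abs abs_numeral, rule ennreal_aux) simp_all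
  also have "\<dots> = ennreal (h powr (g - 1)) * G" using real_ident[OF h] by simp
  finally show ?thesis using True by simp
qed simp

lemma outer:
  fixes G :: "real \<Rightarrow> ennreal"
  assumes [measurable]: "G \<in> borel_measurable borel"
  shows "(\<integral>\<^sup>+\<delta>. ennreal (\<delta> powr (g - 1)) * (\<Sum>k. ennreal (1 / 2 powr (real k * (g + 1))) * (2^k * G (\<delta> / 2^k))) * indicator {1/2..1} \<delta> \<partial>lborel)
       = (\<integral>\<^sup>+h. ennreal (h powr (g - 1)) * G h * indicator {0<..1} h \<partial>lborel)"
proof -
  define T where "T k \<delta> = ennreal (\<delta> powr (g - 1)) * (ennreal (1 / 2 powr (real k * (g + 1))) * (2^k * G (\<delta> / 2^k))) * indicator {1/2<..1} \<delta>" for k :: nat and \<delta> :: real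
  have Tm[measurable]: "T k \<in> borel_measurable borel" for k unfolding T_def by measurable
  have "(\<integral>\<^sup>+\<delta>. ennreal (\<delta> powr (g - 1)) * (\<Sum>k. ennreal (1 / 2 powr (real k * (g + 1))) * (2^k * G (\<delta> / 2^k))) * indicator {1/2..1} \<delta> \<partial>lborel)
      = (\<integral>\<^sup>+\<delta>. (\<Sum>k. T k \<delta>) \<partial>lborel)"
  proof (rule nn_integral_cong_AE)
    show "AE \<delta> in lborel. ennreal (\<delta> powr (g - 1)) * (\<Sum>k. ennreal (1 / 2 powr (real k * (g + 1))) * (2^k * G (\<delta> / 2^k))) * indicator {1/2..1} \<delta> = (\<Sum>k. T k \<delta>)"
      using AE_lborel_singleton[of "1/2"]
    proof eventually_elim
      case (elim \<delta>)
      then have "indicator {1/2..1} \<delta> = (indicator {1/2<..1} \<delta> :: ennreal)" by (auto simp: indicator_def)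
      then show ?case unfolding T_def by (simp only: ennreal_suminf_multc ennreal_suminf_cmult)
    qed
  qed
  also have "\<dots> = (\<Sum>k. \<integral>\<^sup>+\<delta>. T k \<delta> \<partial>lborel)"
    by (rule nn_integral_suminf) simp
  also have "\<dots> = (\<Sum>k. \<integral>\<^sup>+h. ennreal (h powr (g - 1)) * G h * indicator {1/2<..1} (2^k * h) \<partial>lborel)"
  proof (rule suminf_cong)
    fix k :: nat
    have "(\<integral>\<^sup>+\<delta>. T k \<delta> \<partial>lborel) = ennreal \<bar>2^k\<bar> * (\<integral>\<^sup>+h. T k (0 + 2^k * h) \<partial>lborel)"
      by (rule nn_integral_real_affine) simp_all
    also have "\<dots> = (\<integral>\<^sup>+h. ennreal \<bar>2^k\<bar> * T k (0 + 2^k * h) \<partial>lborel)"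
      by (rule nn_integral_cmult[symmetric]) measurable
    also have "\<dots> = (\<integral>\<^sup>+h. ennreal (h powr (g - 1)) * G h * indicator {1/2<..1} (2^k * h) \<partial>lborel)"
      by (rule nn_integral_cong) (simp add: T_def ennreal_ident[simplified])
    finally show "(\<integral>\<^sup>+\<delta>. T k \<delta> \<partial>lborel) = (\<integral>\<^sup>+h. ennreal (h powr (g - 1)) * G h * indicator {1/2<..1} (2^k * h) \<partial>lborel)" .
  qed
  also have "\<dots> = (\<integral>\<^sup>+h. (\<Sum>k. ennreal (h powr (g - 1)) * G h * indicator {1/2<..1} (2^k * h)) \<partial>lborel)"
    by (rule nn_integral_suminf[symmetric]) measurable
  also have "\<dots> = (\<integral>\<^sup>+h. ennreal (h powr (g - 1)) * G h * indicator {0<..1} h \<partial>lborel)"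
    by (simp only: ennreal_suminf_cmult dyadic_partition)
  finally show ?thesis .
qed

lemma lhs_w:
  fixes c :: real
  assumes [measurable]: "w \<in> borel_measurable borel"
  shows "(\<integral>\<^sup>+z. ennreal (\<bar>snd z - fst z\<bar> powr (g - 1)) *
            indicator {(x, y). x \<in> {a<..<b} \<and> y \<in> {a<..<b} \<and> \<bar>w y - w x\<bar> > lam * \<bar>y - x\<bar> powr c} z
          \<partial>(lborel \<Otimes>\<^sub>M lborel))
       = 2 * (\<integral>\<^sup>+h. ennreal (h powr (g - 1)) * Gf lam c a b w h * indicator {0<..} h \<partial>lborel)"
proof -
  define F where "F x y = ennreal (\<bar>y - x\<bar> powr (g - 1)) *
            indicator {(x, y). x \<in> {a<..<b} \<and> y \<in> {a<..<b} \<and> \<bar>w y - w x\<bar> > lam * \<bar>y - x\<bar> powr c} (x, y)" for x y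
  have Fm[measurable]: "(\<lambda>z. F (fst z) (snd z)) \<in> borel_measurable (lborel \<Otimes>\<^sub>M lborel)"
    unfolding F_def by measurable
  have Fm2[measurable]: "(\<lambda>z. F (f z) (g z)) \<in> borel_measurable M"
    if [measurable]: "f \<in> borel_measurable M" "g \<in> borel_measurable M" for f g :: "'x \<Rightarrow> real" and M
    unfolding F_def by measurable
  have Fsym: "F x y = F y x" for x y
    unfolding F_def by (auto simp: indicator_def abs_minus_commute)
  define K where "K h = (\<integral>\<^sup>+x. F x (x + h) \<partial>lborel)" for h
  have Km[measurable]: "K \<in> borel_measurable borel"
  proof -
    have "(\<lambda>h. \<integral>\<^sup>+x. F x (x + h) \<partial>lborel) \<in> borel_measurable lborel" by measurable
    then show ?thesis unfolding K_def by simp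
  qed
  have "(\<integral>\<^sup>+z. ennreal (\<bar>snd z - fst z\<bar> powr (g - 1)) *
            indicator {(x, y). x \<in> {a<..<b} \<and> y \<in> {a<..<b} \<and> \<bar>w y - w x\<bar> > lam * \<bar>y - x\<bar> powr c} z
          \<partial>(lborel \<Otimes>\<^sub>M lborel)) = (\<integral>\<^sup>+z. F (fst z) (snd z) \<partial>(lborel \<Otimes>\<^sub>M lborel))"
    unfolding F_def by simp
  also have "\<dots> = (\<integral>\<^sup>+x. \<integral>\<^sup>+y. F x y \<partial>lborel \<partial>lborel)"
    using lborel.nn_integral_fst[OF Fm] by simp
  also have "\<dots> = (\<integral>\<^sup>+x. \<integral>\<^sup>+h. F x (x + h) \<partial>lborel \<partial>lborel)"
  proof (rule nn_integral_cong)
    fix x :: real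
    have "(\<lambda>y. F x y) \<in> borel_measurable borel" by measurable
    from nn_integral_real_affine[OF this, of 1 x]
    show "(\<integral>\<^sup>+y. F x y \<partial>lborel) = (\<integral>\<^sup>+h. F x (x + h) \<partial>lborel)" by simp
  qed
  also have "\<dots> = (\<integral>\<^sup>+h. K h \<partial>lborel)"
    unfolding K_def
    using lborel_pair.Fubini[of "\<lambda>z. F (fst z) (fst z + snd z)"] by simp
  also have "\<dots> = (\<integral>\<^sup>+h. K h * indicator {0<..} h + K h * indicator {..<0} h \<partial>lborel)"
  proof (rule nn_integral_cong_AE)
    show "AE h in lborel. K h = K h * indicator {0<..} h + K h * indicator {..<0} h"
      using AE_lborel_singleton[of 0] by eventually_elim (auto simp: indicator_def)
  qed
  also have "\<dots> = (\<integral>\<^sup>+h. K h * indicator {0<..} h \<partial>lborel) + (\<integral>\<^sup>+h. K h * indicator {..<0} h \<partial>lborel)"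
    by (rule nn_integral_add) measurable
  also have "(\<integral>\<^sup>+h. K h * indicator {..<0} h \<partial>lborel) = (\<integral>\<^sup>+h. K h * indicator {0<..} h \<partial>lborel)"
  proof -
    have Kneg: "K (- h) = K h" for h
    proof -
      have "(\<lambda>x. F x (x + - h)) \<in> borel_measurable borel" by measurable
      from nn_integral_real_affine[OF this, of 1 h]
      have "K (- h) = (\<integral>\<^sup>+s. F (h + s) (h + s + - h) \<partial>lborel)" unfolding K_def by simp
      also have "\<dots> = K h" unfolding K_def by (simp add: Fsym add.commute)
      finally show ?thesis .
    qed
    have "(\<lambda>h. K h * indicator {..<0} h) \<in> borel_measurable borel" by measurable
    from nn_integral_real_affine[OF this, of "-1" 0]
    show ?thesis by (simp add: Kneg indicator_def)
  qed
  also have "(\<integral>\<^sup>+h. K h * indicator {0<..} h \<partial>lborel) = (\<integral>\<^sup>+h. ennreal (h powr (g - 1)) * Gf lam c a b w h * indicator {0<..} h \<partial>lborel)"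
  proof (rule nn_integral_cong)
    fix h :: real
    show "K h * indicator {0<..} h = ennreal (h powr (g - 1)) * Gf lam c a b w h * indicator {0<..} h"
    proof (cases "h > 0")
      case True
      have "K h = (\<integral>\<^sup>+x. ennreal (h powr (g - 1)) * chi lam c a b w h x \<partial>lborel)"
        unfolding K_def
      proof (rule nn_integral_cong)
        fix x
        show "F x (x + h) = ennreal (h powr (g - 1)) * chi lam c a b w h x"
          unfolding F_def chi_def using True by (auto simp: indicator_def)
      qed
      also have "\<dots> = ennreal (h powr (g - 1)) * Gf lam c a b w h"
        unfolding Gf_def by (rule nn_integral_cmult) measurable
      finally show ?thesis using True by simp
    qed simp
  qed
  finally show ?thesis by (simp add: mult_2)
qed

lemma DF_cong:
  assumes "\<And>k i. a' < real_of_int i / 2^k \<Longrightarrow> real_of_int i / 2^k < b' \<Longrightarrow> v1 (real_of_int i / 2^k) = v2 (real_of_int i / 2^k)"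
  shows "DF g p lam \<delta> v1 a' b' = DF g p lam \<delta> v2 a' b'"
  unfolding DF_def
proof (intro suminf_cong arg_cong[where f=ennreal] arg_cong2[where f="(*)"] refl sum.cong)
  fix k :: nat and i assume i: "i \<in> dyadic_idx a' b' k"
  then have 1: "a' < real_of_int i / 2^k" and 2: "real_of_int (i + 1) / 2^k < b'"
    by (auto simp: dyadic_idx_def)
  have 3: "real_of_int i / 2^k < real_of_int (i + 1) / 2^k"
    by (simp add: divide_strict_right_mono)
  have 4: "a' < real_of_int (i + 1) / 2^k" using 1 3 by linarith
  show "psi g p lam (\<delta> / 2 ^ k) \<bar>v1 (real_of_int (i + 1) / 2 ^ k) - v1 (real_of_int i / 2 ^ k)\<bar> =
        psi g p lam (\<delta> / 2 ^ k) \<bar>v2 (real_of_int (i + 1) / 2 ^ k) - v2 (real_of_int i / 2 ^ k)\<bar>"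
    using assms[OF 1] assms[OF 4 2] 2 3 by simp
qed

lemma get_w:
  fixes u :: "real \<Rightarrow> real"
  assumes u: "u \<in> borel_measurable (restrict_space lebesgue {a<..<b})" and "A \<le> B"
  obtains w N where "w \<in> borel_measurable borel" "\<And>x. A \<le> w x \<and> w x \<le> B"
    "N \<in> null_sets lborel" "\<And>x. x \<in> {a<..<b} \<Longrightarrow> A \<le> u x \<and> u x \<le> B \<Longrightarrow> x \<notin> N \<Longrightarrow> u x = w x"
proof -
  have "(\<lambda>x. indicator {a<..<b} x *\<^sub>R u x) \<in> borel_measurable lebesgue"
    using u by (subst (asm) borel_measurable_restrict_space_iff) auto
  from completion_ex_borel_measurable_real[OF this]
  obtain g' where g'[measurable]: "g' \<in> borel_measurable lborel" and ae: "AE x in lborel. indicator {a<..<b} x *\<^sub>R u x = g' x"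
    by blast
  define w where "w x = max A (min B (g' x))" for x
  have wm: "w \<in> borel_measurable borel" unfolding w_def using g' by simp
  obtain N where N: "{x \<in> space lborel. \<not> indicator {a<..<b} x *\<^sub>R u x = g' x} \<subseteq> N" "N \<in> null_sets lborel"
    by (rule AE_E[OF ae]) (auto simp: null_sets_def)
  show ?thesis
  proof (rule that[OF wm _ N(2)])
    show "A \<le> w x \<and> w x \<le> B" for x unfolding w_def using \<open>A \<le> B\<close> by auto
    fix x assume x: "x \<in> {a<..<b}" "A \<le> u x \<and> u x \<le> B" "x \<notin> N"
    have "x \<notin> {x \<in> space lborel. \<not> indicator {a<..<b} x *\<^sub>R u x = g' x}" using N(1) x(3) by blast
    then have "u x = g' x" using x(1) by simp
    then show "u x = w x" using x unfolding w_def by auto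
  qed
qed

lemma Gf_zero:
  assumes wAB: "\<And>x. A \<le> w x \<and> w x \<le> B" and lam: "lam \<ge> B - A" and AB: "A \<le> B"
    and c: "c \<ge> 0" and h: "h \<ge> 1"
  shows "Gf lam c a b w h = 0"
proof -
  have "chi lam c a b w h t = 0" for t
  proof -
    have "1 \<le> h powr c" using h c by (simp add: ge_one_powr_ge_zero)
    then have "lam * 1 \<le> lam * h powr c" using lam AB by (intro mult_left_mono) auto
    moreover have "\<bar>w (t + h) - w t\<bar> \<le> B - A" using wAB[of t] wAB[of "t + h"] by auto
    ultimately show ?thesis unfolding chi_def using lam by auto
  qed
  then have "chi lam c a b w h = (\<lambda>_. 0)" by (rule ext)
  then show ?thesis unfolding Gf_def by simp
qed

theorem proposition2p1:
  fixes g p A B a b lam :: real and u :: "real \<Rightarrow> real"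
  assumes "g > 0" and "p \<ge> 1" and "B \<ge> A" and "b - a \<ge> 1"
    and "u \<in> borel_measurable (restrict_space lebesgue {a<..<b})"
    and "\<forall>x\<in>{a<..<b}. A \<le> u x \<and> u x \<le> B"
    and "lam \<ge> B - A"
  shows "Ffun g p lam u a b =
    ennreal (2 * lam powr p) *
    (\<integral>\<^sup>+ \<delta> \<in> {1/2..1}. ennreal (\<delta> powr (g - 1)) *
       (\<integral>\<^sup>+ x \<in> {0..\<delta>}. DF g p lam \<delta> (\<lambda>q. u (x + q * \<delta>)) ((a - x) / \<delta>) ((b - x) / \<delta>) \<partial>lebesgue)
     \<partial>lebesgue)"
proof -
  note g = assms(1) and pp = assms(2) and AB = assms(3) and um = assms(5) and uAB = assms(6) and lam = assms(7)
  let ?c = "1 + g / p"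
  have c0: "?c \<ge> 0" using g pp by (simp add: add_nonneg_nonneg)
  obtain w N where wm[measurable]: "w \<in> borel_measurable borel" and wAB: "\<And>x. A \<le> w x \<and> w x \<le> B"
    and N: "N \<in> null_sets lborel" and uw: "\<And>x. x \<in> {a<..<b} \<Longrightarrow> A \<le> u x \<and> u x \<le> B \<Longrightarrow> x \<notin> N \<Longrightarrow> u x = w x"
    using get_w[OF um AB] by metis
  have uw': "u x = w x" if "x \<in> {a<..<b}" "x \<notin> N" for x
    using uw[OF that(1) _ that(2)] uAB that(1) by blast
  define I where "I = (\<integral>\<^sup>+h. ennreal (h powr (g - 1)) * Gf lam ?c a b w h * indicator {0<..1} h \<partial>lborel)"
  have "Ffun g p lam u a b = ennreal (lam powr p) *
     (\<integral>\<^sup>+z. ennreal (\<bar>snd z - fst z\<bar> powr (g - 1)) *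
            indicator {(x, y). x \<in> {a<..<b} \<and> y \<in> {a<..<b} \<and> \<bar>u y - u x\<bar> > lam * \<bar>y - x\<bar> powr ?c} z
          \<partial>(lborel \<Otimes>\<^sub>M lborel))"
    unfolding Ffun_def nn_integral_completion lborel_prod ..
  also have "(\<integral>\<^sup>+z. ennreal (\<bar>snd z - fst z\<bar> powr (g - 1)) *
            indicator {(x, y). x \<in> {a<..<b} \<and> y \<in> {a<..<b} \<and> \<bar>u y - u x\<bar> > lam * \<bar>y - x\<bar> powr ?c} z
          \<partial>(lborel \<Otimes>\<^sub>M lborel))
      = (\<integral>\<^sup>+z. ennreal (\<bar>snd z - fst z\<bar> powr (g - 1)) *
            indicator {(x, y). x \<in> {a<..<b} \<and> y \<in> {a<..<b} \<and> \<bar>w y - w x\<bar> > lam * \<bar>y - x\<bar> powr ?c} z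
          \<partial>(lborel \<Otimes>\<^sub>M lborel))"
  proof (rule nn_integral_cong_AE)
    have n1: "N \<times> UNIV \<in> null_sets (lborel \<Otimes>\<^sub>M (lborel::real measure))"
      using N by (intro lborel.times_in_null_sets1) auto
    have n2: "UNIV \<times> N \<in> null_sets ((lborel::real measure) \<Otimes>\<^sub>M lborel)"
      using N by (intro lborel.times_in_null_sets2) auto
    show "AE z in lborel \<Otimes>\<^sub>M lborel. ennreal (\<bar>snd z - fst z\<bar> powr (g - 1)) *
            indicator {(x, y). x \<in> {a<..<b} \<and> y \<in> {a<..<b} \<and> \<bar>u y - u x\<bar> > lam * \<bar>y - x\<bar> powr ?c} z
          = ennreal (\<bar>snd z - fst z\<bar> powr (g - 1)) *
            indicator {(x, y). x \<in> {a<..<b} \<and> y \<in> {a<..<b} \<and> \<bar>w y - w x\<bar> > lam * \<bar>y - x\<bar> powr ?c} z"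
      using AE_not_in[OF n1] AE_not_in[OF n2]
    proof eventually_elim
      case (elim z)
      obtain x y where z: "z = (x, y)" by (cases z)
      from elim have "x \<notin> N" "y \<notin> N" by (auto simp: z)
      then show ?case using uw' by (auto simp: z indicator_def)
    qed
  qed
  also have "\<dots> = 2 * (\<integral>\<^sup>+h. ennreal (h powr (g - 1)) * Gf lam ?c a b w h * indicator {0<..} h \<partial>lborel)"
    by (rule lhs_w) fact
  also have "(\<integral>\<^sup>+h. ennreal (h powr (g - 1)) * Gf lam ?c a b w h * indicator {0<..} h \<partial>lborel) = I"
    unfolding I_def
  proof (rule nn_integral_cong)
    fix h :: real
    show "ennreal (h powr (g - 1)) * Gf lam ?c a b w h * indicator {0<..} h =
          ennreal (h powr (g - 1)) * Gf lam ?c a b w h * indicator {0<..1} h"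
      using Gf_zero[OF wAB lam AB c0, of h a b] by (cases "h \<le> 1") (auto simp: indicator_def)
  qed
  finally have L: "Ffun g p lam u a b = ennreal (lam powr p) * (2 * I)" .
  have inner: "(\<integral>\<^sup>+ x \<in> {0..\<delta>}. DF g p lam \<delta> (\<lambda>q. u (x + q * \<delta>)) ((a - x) / \<delta>) ((b - x) / \<delta>) \<partial>lborel)
      = (\<Sum>k. ennreal (1 / 2 powr (real k * (g + 1))) * (2^k * Gf lam ?c a b w (\<delta> / 2^k)))"
    if d: "\<delta> > 0" for \<delta> :: real
  proof -
    have ae: "AE x in lborel. \<forall>ki::nat \<times> int. x + real_of_int (snd ki) / 2^(fst ki) * \<delta> \<notin> N"
    proof (subst AE_all_countable, intro allI)
      fix ki :: "nat \<times> int"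
      have "AE x in lborel. x \<notin> {x. x - (- (real_of_int (snd ki) / 2^(fst ki) * \<delta>)) \<in> N}"
        by (rule AE_not_in[OF null_sets_translation[OF N]])
      then show "AE x in lborel. x + real_of_int (snd ki) / 2^(fst ki) * \<delta> \<notin> N" by simp
    qed
    have "(\<integral>\<^sup>+ x \<in> {0..\<delta>}. DF g p lam \<delta> (\<lambda>q. u (x + q * \<delta>)) ((a - x) / \<delta>) ((b - x) / \<delta>) \<partial>lborel)
        = (\<integral>\<^sup>+ x. DF g p lam \<delta> (\<lambda>q. w (x + q * \<delta>)) ((a - x) / \<delta>) ((b - x) / \<delta>) * indicator {0..\<delta>} x \<partial>lborel)"
      using ae
    proof (rule nn_integral_cong_AE[OF eventually_mono])
      fix x assume x: "\<forall>ki::nat \<times> int. x + real_of_int (snd ki) / 2^(fst ki) * \<delta> \<notin> N"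
      have "DF g p lam \<delta> (\<lambda>q. u (x + q * \<delta>)) ((a - x) / \<delta>) ((b - x) / \<delta>) = DF g p lam \<delta> (\<lambda>q. w (x + q * \<delta>)) ((a - x) / \<delta>) ((b - x) / \<delta>)"
      proof (rule DF_cong)
        fix k :: nat and i :: int
        assume 1: "(a - x) / \<delta> < real_of_int i / 2^k" and 2: "real_of_int i / 2^k < (b - x) / \<delta>"
        have "x + real_of_int i / 2^k * \<delta> \<in> {a<..<b}"
          using 1 2 d by (auto simp: field_simps)
        moreover have "x + real_of_int i / 2^k * \<delta> \<notin> N" using x[rule_format, of "(k, i)"] by simp
        ultimately show "u (x + real_of_int i / 2^k * \<delta>) = w (x + real_of_int i / 2^k * \<delta>)" by (rule uw')
      qed
      then show "DF g p lam \<delta> (\<lambda>q. u (x + q * \<delta>)) ((a - x) / \<delta>) ((b - x) / \<delta>) * indicator {0..\<delta>} x =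
                 DF g p lam \<delta> (\<lambda>q. w (x + q * \<delta>)) ((a - x) / \<delta>) ((b - x) / \<delta>) * indicator {0..\<delta>} x" by simp
    qed
    also have "\<dots> = (\<Sum>k. ennreal (1 / 2 powr (real k * (g + 1))) * (2^k * Gf lam ?c a b w (\<delta> / 2^k)))"
      by (rule inner_w[OF wm d])
    finally show ?thesis .
  qed
  have "(\<integral>\<^sup>+ \<delta> \<in> {1/2..1}. ennreal (\<delta> powr (g - 1)) *
       (\<integral>\<^sup>+ x \<in> {0..\<delta>}. DF g p lam \<delta> (\<lambda>q. u (x + q * \<delta>)) ((a - x) / \<delta>) ((b - x) / \<delta>) \<partial>lebesgue)
     \<partial>lebesgue)
     = (\<integral>\<^sup>+\<delta>. ennreal (\<delta> powr (g - 1)) * (\<Sum>k. ennreal (1 / 2 powr (real k * (g + 1))) * (2^k * Gf lam ?c a b w (\<delta> / 2^k))) * indicator {1/2..1} \<delta> \<partial>lborel)"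
    unfolding nn_integral_completion
  proof (rule nn_integral_cong)
    fix \<delta> :: real
    show "ennreal (\<delta> powr (g - 1)) *
       (\<integral>\<^sup>+ x \<in> {0..\<delta>}. DF g p lam \<delta> (\<lambda>q. u (x + q * \<delta>)) ((a - x) / \<delta>) ((b - x) / \<delta>) \<partial>lborel) * indicator {1/2..1} \<delta>
      = ennreal (\<delta> powr (g - 1)) * (\<Sum>k. ennreal (1 / 2 powr (real k * (g + 1))) * (2^k * Gf lam ?c a b w (\<delta> / 2^k))) * indicator {1/2..1} \<delta>"
    proof (cases "\<delta> \<in> {1/2..1}")
      case True
      then have "\<delta> > 0" by simp
      then show ?thesis by (simp only: inner)
    qed simp
  qed
  also have "\<dots> = I" unfolding I_def by (rule outer) measurable
  finally have R: "(\<integral>\<^sup>+ \<delta> \<in> {1/2..1}. ennreal (\<delta> powr (g - 1)) *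
       (\<integral>\<^sup>+ x \<in> {0..\<delta>}. DF g p lam \<delta> (\<lambda>q. u (x + q * \<delta>)) ((a - x) / \<delta>) ((b - x) / \<delta>) \<partial>lebesgue)
     \<partial>lebesgue) = I" .
  have "ennreal (2 * lam powr p) = 2 * ennreal (lam powr p)"
    by (simp add: ennreal_mult)
  then show ?thesis unfolding L R by (simp add: ac_simps)
qed

end
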